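(* There is a family of finite labeled prime event structures $(\mathcal{E}_n)_{n\ge1}$ with event sets $E_n$ such that $|E_n|=n+1$, $|\mathcal{L}(\mathcal{E}_n)|=n!$, and the automaton encoding $\mathcal{A}^{\mathcal{E}_n}$ has exactly $|Q^{\mathcal{E}_n}|=2^n+1$ states. Moreover, every nondeterministic finite automaton $\mathcal{A}$ with $\mathcal{L}(\mathcal{A})=\mathcal{L}(\mathcal{E}_n)$ has at least $2^n$ states.
   Context: A finite $\mathcal{X}$-labeled prime event structure is $\mathcal{E}=\langle E,<,\#,h\rangle$ with finite $E$, strict partial order $<$, labeling $h:E\to\mathcal{X}$, and a symmetric irreflexive conflict relation $\#$ closed under $<$ (if $e\#e'$ and $e'<e''$ then $e\#e''$); $\mathcal{X}$ contains $\varepsilon$ denoting the empty word; there is an event $\bot$ with nothing below it, $\bot<e$ for all other $e$, $h(\bot)=\varepsilon$. A configuration is a left-closed, conflict-free subset of $E$; maximal if no configuration strictly contains it. A trace of a configuration $C$ lists every event of $C$ exactly once respecting $<$; $\mathcal{L}(\mathcal{E})$ is the set of words $h(t)$ (pointwise labels, $\varepsilon$ omitted) for traces $t$ of maximal configurations. The automaton encoding of $\mathcal{E}$ is the NFA $\mathcal{A}^{\mathcal{E}}=\langle Q^{\mathcal{E}},\mathcal{X},\delta^{\mathcal{E}},q_0,F\rangle$ with $Q^{\mathcal{E}}=\{q_C\mid C$ a configuration of $\mathcal{E}\}$, $(q_{C_1},\sigma,q_{C_2})\in\delta^{\mathcal{E}}$ iff there is $e\in E$ with $C_1\cup\{e\}=C_2$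 and $h(e)=\sigma$ (transitions labeled $\varepsilon$ are $\varepsilon$-moves), initial state $q_{\{\bot\}}$, and accepting states $F=\{q_C\mid C$ maximal$\}$. *)

theory Defs
  imports Main
begin

text \<open>Labels: a label of type 'x option; None plays the role of the empty word epsilon.\<close>

record ('e, 'x) pes =
  ev   :: "'e set"
  lt   :: "('e \<times> 'e) set"
  cfl  :: "('e \<times> 'e) set"
  lab  :: "'e \<Rightarrow> 'x option"
  bot  :: "'e"

definition wf_pes :: "('e, 'x) pes \<Rightarrow> bool" where
  "wf_pes P \<longleftrightarrow>
     finite (ev P) \<and>
     lt P \<subseteq> ev P \<times> ev P \<and> irrefl (lt P) \<and> trans (lt P) \<and>
     cfl P \<subseteq> ev P \<times> ev P \<and> sym (cfl P) \<and> irrefl (cfl P) \<and>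
     (\<forall>e e' e''. (e, e') \<in> cfl P \<and> (e', e'') \<in> lt P \<longrightarrow> (e, e'') \<in> cfl P) \<and>
     bot P \<in> ev P \<and> (\<forall>e. (e, bot P) \<notin> lt P) \<and>
     (\<forall>e \<in> ev P. e \<noteq> bot P \<longrightarrow> (bot P, e) \<in> lt P) \<and>
     lab P (bot P) = None"

definition is_config :: "('e, 'x) pes \<Rightarrow> 'e set \<Rightarrow> bool" where
  "is_config P C \<longleftrightarrow> C \<subseteq> ev P \<and>
     (\<forall>e \<in> C. \<forall>e'. (e', e) \<in> lt P \<longrightarrow> e' \<in> C) \<and>
     (\<forall>e \<in> C. \<forall>e' \<in> C. (e, e') \<notin> cfl P)"

definition is_max_config :: "('e, 'x) pes \<Rightarrow> 'e set \<Rightarrow> bool" where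
  "is_max_config P C \<longleftrightarrow> is_config P C \<and> \<not> (\<exists>C'. is_config P C' \<and> C \<subset> C')"

definition is_trace :: "('e, 'x) pes \<Rightarrow> 'e set \<Rightarrow> 'e list \<Rightarrow> bool" where
  "is_trace P C t \<longleftrightarrow> distinct t \<and> set t = C \<and>
     (\<forall>i j. i < j \<and> j < length t \<longrightarrow> (t ! j, t ! i) \<notin> lt P)"

definition pes_lang :: "('e, 'x) pes \<Rightarrow> 'x list set" where
  "pes_lang P = {List.map_filter (lab P) t | t C. is_max_config P C \<and> is_trace P C t}"

record ('q, 'x) nfa =
  states :: "'q set"
  trans  :: "('q \<times> 'x option \<times> 'q) set"
  init   :: "'q"
  final  :: "'q set"

definition wf_nfa :: "('q, 'x) nfa \<Rightarrow> bool" where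
  "wf_nfa A \<longleftrightarrow> finite (states A) \<and> init A \<in> states A \<and> final A \<subseteq> states A \<and>
     trans A \<subseteq> states A \<times> UNIV \<times> states A"

inductive steps :: "('q, 'x) nfa \<Rightarrow> 'q \<Rightarrow> 'x list \<Rightarrow> 'q \<Rightarrow> bool" for A where
  refl: "steps A q [] q"
| eps:  "(q, None, q') \<in> trans A \<Longrightarrow> steps A q' w r \<Longrightarrow> steps A q w r"
| sym:  "(q, Some a, q') \<in> trans A \<Longrightarrow> steps A q' w r \<Longrightarrow> steps A q (a # w) r"

definition nfa_lang :: "('q, 'x) nfa \<Rightarrow> 'x list set" where
  "nfa_lang A = {w. \<exists>f \<in> final A. steps A (init A) w f}"

definition encoding :: "('e, 'x) pes \<Rightarrow> ('e set, 'x) nfa" where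
  "encoding P = \<lparr> states = {C. is_config P C},
     trans = {(C1, \<sigma>, C2). is_config P C1 \<and> is_config P C2 \<and>
                (\<exists>e \<in> ev P. C1 \<union> {e} = C2 \<and> lab P e = \<sigma>)},
     init = {bot P},
     final = {C. is_max_config P C} \<rparr>"

end

theory Submission
  imports Defs "HOL-Combinatorics.Multiset_Permutations"
begin

definition ESn :: "nat \<Rightarrow> (nat, nat) pes" where
  "ESn n = \<lparr> ev = {0..n}, lt = {(0, i) | i. i \<in> {1..n}}, cfl = {},
            lab = (\<lambda>i. if i = 0 then None else Some i), bot = 0 \<rparr>"

lemma wf_ESn: "wf_pes (ESn n)"
  unfolding wf_pes_def ESn_def
  by (auto simp: irrefl_def Relation.trans_def sym_def)

lemma config_ESn: "is_config (ESn n) C \<longleftrightarrow> C \<subseteq> {0..n} \<and> (C \<noteq> {} \<longrightarrow> 0 \<in> C)"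
  unfolding is_config_def ESn_def by (auto simp: subset_iff) (metis Suc_leI atLeastAtMost_iff neq0_conv)

lemma max_config_ESn: "is_max_config (ESn n) C \<longleftrightarrow> C = {0..n}"
proof
  assume "is_max_config (ESn n) C"
  then have c: "is_config (ESn n) C" and m: "\<not> (\<exists>C'. is_config (ESn n) C' \<and> C \<subset> C')"
    unfolding is_max_config_def by auto
  have "is_config (ESn n) {0..n}" by (simp add: config_ESn)
  with c m show "C = {0..n}" by (auto simp: config_ESn)
next
  assume "C = {0..n}"
  then show "is_max_config (ESn n) C"
    unfolding is_max_config_def by (auto simp: config_ESn)
qed

lemma map_filter_pos: "0 \<notin> set w \<Longrightarrow> List.map_filter (\<lambda>i::nat. if i = 0 then None else Some i) w = w"
  by (induction w) (auto simp: map_filter_simps)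

lemma lang_ESn: "pes_lang (ESn n) = permutations_of_set {1..n}"
proof (rule set_eqI, rule iffI)
  fix w assume "w \<in> pes_lang (ESn n)"
  then obtain t C where mc: "is_max_config (ESn n) C" and tr0: "is_trace (ESn n) C t"
      and w: "w = List.map_filter (lab (ESn n)) t"
    unfolding pes_lang_def by blast
  from mc have "C = {0..n}" by (simp add: max_config_ESn)
  with tr0 have tr: "is_trace (ESn n) {0..n} t" by simp
  have d: "distinct t" and st: "set t = {0..n}"
    and o: "\<And>i j. i < j \<Longrightarrow> j < length t \<Longrightarrow> (t ! j, t ! i) \<notin> lt (ESn n)"
    using tr unfolding is_trace_def by auto
  have "0 \<in> set t" using st by simp
  then obtain j where j: "j < length t" "t ! j = 0"
    by (metis in_set_conv_nth)
  have "j = 0"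
  proof (rule ccontr)
    assume jn: "j \<noteq> 0"
    then have l0: "0 < length t" using j by linarith
    have "t ! 0 \<noteq> t ! j" using nth_eq_iff_index_eq[OF d l0 j(1)] jn by simp
    then have "t ! 0 \<noteq> 0" using j by simp
    moreover have "t ! 0 \<in> set t" using l0 by simp
    then have "t ! 0 \<le> n" using st by simp
    ultimately have "(t ! j, t ! 0) \<in> lt (ESn n)" using j by (simp add: ESn_def)
    with o[of 0 j] j jn show False by simp
  qed
  then obtain t' where t: "t = 0 # t'" using j by (cases t) auto
  have z: "0 \<notin> set t'" and dt: "distinct t'" using d t by auto
  have ins: "insert 0 (set t') = {0..n}" using st t by simp
  have s0: "set t' = {0..n} - {0}" using ins z by blast
  have e01: "{0..n} - {0} = {1..n}" by (auto simp: atLeastAtMost_iff)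
  have s1: "set t' = {1..n}" using s0 e01 by simp
  have wt: "w = t'" using w t z by (simp add: ESn_def map_filter_pos)
  show "w \<in> permutations_of_set {1..n}" using dt s1 wt by (simp add: permutations_of_set_def)
next
  fix w assume "w \<in> permutations_of_set {1..n}"
  then have d: "distinct w" and s: "set w = {1..n}" by (auto simp: permutations_of_set_def)
  then have z: "0 \<notin> set w" by auto
  have "is_trace (ESn n) {0..n} (0 # w)"
    unfolding is_trace_def
  proof (intro conjI allI impI)
    show "distinct (0 # w)" using d z by simp
    show "set (0 # w) = {0..n}" using s by auto
    fix i j assume "i < j \<and> j < length (0 # w)"
    then have "(0 # w) ! j \<in> set w" by (cases j) auto
    then have "(0 # w) ! j \<noteq> 0" using z by metis
    then show "((0 # w) ! j, (0 # w) ! i) \<notin> lt (ESn n)" by (simp add: ESn_def)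
  qed
  moreover have "List.map_filter (lab (ESn n)) (0 # w) = w"
    using z by (simp add: ESn_def map_filter_pos map_filter_simps)
  moreover have "is_max_config (ESn n) {0..n}" by (simp add: max_config_ESn)
  ultimately show "w \<in> pes_lang (ESn n)"
    unfolding pes_lang_def mem_Collect_eq
    by (intro exI[of _ "0 # w"] exI[of _ "{0..n}"]) simp
qed

lemma states_ESn: "card (states (encoding (ESn n))) = 2 ^ n + 1"
proof -
  have eq: "{C. is_config (ESn n) C} = insert {} (insert 0 ` Pow {1..n})"
  proof (rule set_eqI, rule iffI)
    fix C assume "C \<in> {C. is_config (ESn n) C}"
    then have C: "C \<subseteq> {0..n}" "C \<noteq> {} \<longrightarrow> 0 \<in> C" by (auto simp: config_ESn)
    show "C \<in> insert {} (insert 0 ` Pow {1..n})"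
    proof (cases "C = {}")
      case False
      then have "C = insert 0 (C - {0})" "C - {0} \<in> Pow {1..n}" using C by auto
      then show ?thesis by blast
    qed simp
  next
    fix C assume "C \<in> insert {} (insert 0 ` Pow {1..n})"
    then show "C \<in> {C. is_config (ESn n) C}" by (auto simp: config_ESn)
  qed
  have inj: "inj_on (insert 0) (Pow {1..n})"
    by (rule inj_onI) (metis PowD atLeastAtMost_iff insert_ident not_one_le_zero subsetD)
  have "card (insert 0 ` Pow {1..n}) = 2 ^ n"
    using card_image[OF inj] by (simp add: card_Pow)
  moreover have "{} \<notin> insert 0 ` Pow {1..n}" by auto
  moreover have "finite (insert 0 ` Pow {1..(n::nat)})" by simp
  ultimately show ?thesis by (simp add: encoding_def eq)
qed

lemma steps_append: "steps A q u m \<Longrightarrow> steps A m v r \<Longrightarrow> steps A q (u @ v) r"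
proof (induction rule: steps.induct)
  case (refl q)
  then show ?case by simp
next
  case (eps q q' w r)
  then show ?case using steps.eps by simp
next
  case (sym q a q' w r)
  then show ?case using steps.sym by simp
qed

lemma steps_split: "steps A q w r \<Longrightarrow> w = u @ v \<Longrightarrow> \<exists>m. steps A q u m \<and> steps A m v r"
proof (induction arbitrary: u rule: steps.induct)
  case (refl q)
  then have "u = [] \<and> v = []" by simp
  then show ?case using steps.refl[of A q] by (intro exI[of _ q]) simp
next
  case (eps q q' w r)
  from eps.IH[OF eps.prems] obtain m where m: "steps A q' u m" "steps A m v r" by (elim exE conjE)
  show ?case using steps.eps[OF eps.hyps(1) m(1)] m(2) by (intro exI[of _ m] conjI)
next
  case (sym q a q' w r)
  show ?case
  proof (cases u)
    case Nil
    then have "v = a # w" using sym.prems by simp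
    then have "steps A q v r" using steps.sym[OF sym.hyps] by simp
    then show ?thesis using Nil steps.refl[of A q] by (intro exI[of _ q]) simp
  next
    case (Cons b u')
    then have "w = u' @ v" using sym.prems by simp
    from sym.IH[OF this] obtain m where m: "steps A q' u' m" "steps A m v r" by (elim exE conjE)
    have "b = a" using Cons sym.prems by simp
    then have "steps A q u m" using Cons steps.sym[OF sym.hyps(1) m(1)] by simp
    then show ?thesis using m(2) by (intro exI[of _ m] conjI)
  qed
qed

lemma steps_states: "steps A q w r \<Longrightarrow> wf_nfa A \<Longrightarrow> q \<in> states A \<Longrightarrow> r \<in> states A"
proof (induction rule: steps.induct)
  case (refl q)
  then show ?case by simp
next
  case (eps q q' w r)
  have "nfa.trans A \<subseteq> states A \<times> UNIV \<times> states A" using eps.prems(1) by (simp add: wf_nfa_def)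
  then have "q' \<in> states A" using eps.hyps(1) by blast
  then show ?case using eps.IH eps.prems(1) by simp
next
  case (sym q a q' w r)
  have "nfa.trans A \<subseteq> states A \<times> UNIV \<times> states A" using sym.prems(1) by (simp add: wf_nfa_def)
  then have "q' \<in> states A" using sym.hyps(1) by blast
  then show ?case using sym.IH sym.prems(1) by simp
qed

lemma lower_bound:
  fixes A :: "(nat, nat) nfa"
  assumes wf: "wf_nfa A" and L: "nfa_lang A = permutations_of_set {1..n}"
  shows "card (states A) \<ge> 2 ^ n"
proof -
  define x where "x S = sorted_list_of_set S" for S :: "nat set"
  define y where "y S = sorted_list_of_set ({1..n} - S)" for S :: "nat set"
  have key: "x S @ y T \<in> permutations_of_set {1..n} \<longleftrightarrow> S = T"
    if "S \<subseteq> {1..n}" "T \<subseteq> {1..n}" for S T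
  proof
    assume a: "x S @ y T \<in> permutations_of_set {1..n}"
    have fS: "finite S" "finite T" using that finite_subset by auto
    then have d: "distinct (x S @ y T)" and s: "set (x S @ y T) = {1..n}"
      using a by (auto simp: permutations_of_set_def)
    then have "S \<inter> ({1..n} - T) = {}" "S \<union> ({1..n} - T) = {1..n}"
      using fS by (auto simp: x_def y_def)
    then show "S = T" using that by blast
  next
    assume "S = T"
    then show "x S @ y T \<in> permutations_of_set {1..n}"
      using that finite_subset[OF that(1)] by (auto simp: permutations_of_set_def x_def y_def)
  qed
  define q where "q S = (SOME m. steps A (init A) (x S) m \<and> (\<exists>f \<in> final A. steps A m (y S) f))" for S
  have qS: "steps A (init A) (x S) (q S) \<and> (\<exists>f \<in> final A. steps A (q S) (y S) f)"
    if "S \<subseteq> {1..n}" for S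
  proof -
    have "x S @ y S \<in> nfa_lang A" using key[OF that that] L by simp
    then obtain f where "f \<in> final A" "steps A (init A) (x S @ y S) f"
      unfolding nfa_lang_def by auto
    then obtain m where "steps A (init A) (x S) m" "steps A m (y S) f"
      using steps_split[of A "init A" "x S @ y S" f "x S" "y S"] by auto
    then have "\<exists>m. steps A (init A) (x S) m \<and> (\<exists>f \<in> final A. steps A m (y S) f)"
      using \<open>f \<in> final A\<close> by blast
    then show ?thesis unfolding q_def by (rule someI_ex)
  qed
  have inj: "inj_on q (Pow {1..n})"
  proof (rule inj_onI)
    fix S T assume S: "S \<in> Pow {1..n}" and T: "T \<in> Pow {1..n}" and e: "q S = q T"
    from qS[of S] S have a: "steps A (init A) (x S) (q S)" by auto
    from qS[of T] T obtain f where "f \<in> final A" "steps A (q T) (y T) f" by auto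
    then have "steps A (init A) (x S @ y T) f" using a e steps_append[of A "init A" "x S" "q T" "y T" f] by simp
    then have "x S @ y T \<in> nfa_lang A" using \<open>f \<in> final A\<close> unfolding nfa_lang_def by blast
    then show "S = T" using key S T L by auto
  qed
  have sub: "q ` Pow {1..n} \<subseteq> states A"
  proof
    fix m assume "m \<in> q ` Pow {1..n}"
    then obtain S where "S \<subseteq> {1..n}" "m = q S" by auto
    then show "m \<in> states A" using qS steps_states wf by (metis wf_nfa_def)
  qed
  have "card (Pow {1..n}) \<le> card (states A)"
    using card_inj_on_le[OF inj sub] wf by (simp add: wf_nfa_def)
  then show ?thesis by (simp add: card_Pow)
qed

theorem theorem5:
  "\<exists>ES :: nat \<Rightarrow> (nat, nat) pes. \<forall>n \<ge> 1.
     wf_pes (ES n) \<and>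
     card (ev (ES n)) = n + 1 \<and>
     card (pes_lang (ES n)) = fact n \<and>
     card (states (encoding (ES n))) = 2 ^ n + 1 \<and>
     (\<forall>A :: (nat, nat) nfa. wf_nfa A \<and> nfa_lang A = pes_lang (ES n) \<longrightarrow>
        card (states A) \<ge> 2 ^ n)"
proof (rule exI[of _ ESn], intro allI impI conjI)
  fix n :: nat
  show "wf_pes (ESn n)" by (rule wf_ESn)
  show "card (ev (ESn n)) = n + 1" by (simp add: ESn_def)
  show "card (pes_lang (ESn n)) = fact n" by (simp add: lang_ESn)
  show "card (states (encoding (ESn n))) = 2 ^ n + 1" by (rule states_ESn)
  fix A :: "(nat, nat) nfa"
  assume "wf_nfa A \<and> nfa_lang A = pes_lang (ESn n)"
  then show "card (states A) \<ge> 2 ^ n" using lower_bound lang_ESn by simp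
qed

end
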